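(* Let $\mathbb F$ be a field of characteristic different from $2$ and $3$, let $f,g,v,w\in\mathbb F$, put $A=X^3+fX+g$, $R=-v(X-w)$ and $D=A^2+4R=(X^3+fX+g)^2-4v(X-w)$. Let $Z=\tfrac12(Y+A)$ on the curve $Y^2=D(X)$, so that $Z^2-AZ-R=0$, and let $\overline Z=\tfrac12(-Y+A)$ be its conjugate. Suppose $Z_0=\bigl(Z+d_0(X+e_0)\bigr)/\bigl(u_0(X^2-v_0X+w_0)\bigr)$, where $u_0(X^2-v_0X+w_0)$ divides $d_0^2(X+e_0)^2+d_0(X+e_0)A-R$, has a two-sided continued fraction expansion all of whose partial quotients have degree $1$, with complete quotients $$Z_h=\frac{Z+d_h(X+e_h)}{u_h(X^2-v_hX+w_h)}\qquad(h\in\mathbb Z),$$ in the sense of the Standing Setup below (with $u_h\neq0$ for all $h$). Let $(T_h)_{h\in\mathbb Z}$ be a sequence of nonzero elements of $\mathbb F$ satisfying $T_{h-1}T_{h+1}=d_hT_h^2$ for all $h$. Then for all $h\in\mathbb Z$, $$T_{h-3}T_{h+3}=v^2\,T_{h-2}T_{h+2}-v^3\,(g+wf+w^3)\,T_h^2 .$$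
   Context: Standing Setup. $\mathbb F$ is a field of characteristic not $2$ or $3$; $f,g\in\mathbb F$; $A=X^3+fX+g\in\mathbb F[X]$; $R\in\mathbb F[X]$ is a polynomial of degree at most $2$; $D=A^2+4R$; $Y$ satisfies $Y^2=D(X)$, $Z=\tfrac12(Y+A)$ and $\overline Z=\tfrac12(-Y+A)$, so $Z+\overline Z=A$ and $Z\overline Z=-R$. We are given sequences $(u_h),(v_h),(w_h),(d_h),(e_h)$ of elements of $\mathbb F$ indexed by $h\in\mathbb Z$, with all $u_h\neq0$, such that $Z_h=\bigl(Z+d_h(X+e_h)\bigr)/\bigl(u_h(X^2-v_hX+w_h)\bigr)$ are the consecutive complete quotients of a continued fraction expansion whose $h$-th line is $$\frac{Z+d_h(X+e_h)}{u_h(X^2-v_hX+w_h)}=\frac{X+v_h}{u_h}-\frac{\overline Z+d_{h+1}(X+e_{h+1})}{u_h(X^2-v_hX+w_h)} .$$ Equivalently, for every $h\in\mathbb Z$ the following two identities hold in $\mathbb F[X]$: (i) $A+d_h(X+e_h)+d_{h+1}(X+e_{h+1})=(X+v_h)(X^2-v_hX+w_h)$; (ii) $-u_hu_{h+1}(X^2-v_hX+w_h)(X^2-v_{h+1}X+w_{h+1})=\bigl(Z+d_{h+1}(X+e_{h+1})\bigr)\bigl(\overline Z+d_{h+1}(X+e_{h+1})\bigr)=d_{h+1}^2(X+e_{h+1})^2+d_{h+1}(X+e_{h+1})A-R$. In this statement $R=-v(X-w)$ with $v,w\in\mathbb F$. *)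

theory Defs
  imports "HOL-Computational_Algebra.Polynomial"
begin

definition cubicA :: "'a::comm_ring_1 \<Rightarrow> 'a \<Rightarrow> 'a poly" where
  "cubicA f g = [:g, f, 0, 1:]"

definition linR :: "'a::comm_ring_1 \<Rightarrow> 'a \<Rightarrow> 'a poly" where
  "linR v w = smult (- v) [:- w, 1:]"

definition quadp :: "'a::comm_ring_1 \<Rightarrow> 'a \<Rightarrow> 'a poly" where
  "quadp a b = [:b, - a, 1:]"

text \<open>Identities (i) and (ii) of the continued fraction expansion (the h-th line),
  with R = linR v w.\<close>
definition cf_line :: "'a::comm_ring_1 \<Rightarrow> 'a \<Rightarrow> 'a \<Rightarrow> 'a \<Rightarrow>
    (int \<Rightarrow> 'a) \<Rightarrow> (int \<Rightarrow> 'a) \<Rightarrow> (int \<Rightarrow> 'a) \<Rightarrow> (int \<Rightarrow> 'a) \<Rightarrow> (int \<Rightarrow> 'a) \<Rightarrow> int \<Rightarrow> bool" where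
  "cf_line f g v w u vs ws d e h \<longleftrightarrow>
     cubicA f g + smult (d h) [:e h, 1:] + smult (d (h+1)) [:e (h+1), 1:]
       = [:vs h, 1:] * quadp (vs h) (ws h)
   \<and> smult (- (u h * u (h+1))) (quadp (vs h) (ws h) * quadp (vs (h+1)) (ws (h+1)))
       = smult ((d (h+1))^2) ([:e (h+1), 1:]^2)
         + smult (d (h+1)) [:e (h+1), 1:] * cubicA f g - linR v w"

end

theory Submission imports Defs begin

lemma core1:
  fixes f g v w d0 d1 e0 e1 a0 b0 a1 b1 :: "'a::field"
  assumes nz: "d0 \<noteq> 0" "d1 \<noteq> 0"
    and L1: "f + d0 + d1 = b0 - a0^2" and L0: "g + d0*e0 + d1*e1 = a0*b0"
    and C3: "-d1*(a0+a1) = d1*e1" and C2: "d1*(b0+b1+a0*a1) = d1^2 + d1*f"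
    and C1: "-d1*(a0*b1+a1*b0) = 2*d1^2*e1 + d1*(e1*f+g) + v"
    and C0: "d1*(b0*b1) = d1^2*e1^2+d1*e1*g - v*w"
  shows "a1 = -a0 - e1" "b1 = a0*e1 - d0" "d0*d1*a0 = v - d0*d1*(e0+e1)"
    "d0*d1*b0 = d0*d1*e0*e1 + v*w"
proof -
  have "d1*(a1 + a0 + e1) = 0" using C3 by algebra
  then have "a1 + a0 + e1 = 0" using nz by simp
  then show S2: "a1 = -a0 - e1" by algebra
  have "d1*(b1 + a0*a1 + a0^2 + d0) = 0" using C2 L1 by algebra
  then have "b1 + a0*a1 + a0^2 + d0 = 0" using nz by simp
  then show S5: "b1 = a0*e1 - d0" using S2 by algebra
  show "d0*d1*a0 = v - d0*d1*(e0+e1)" using C1 L0 L1 S2 S5 by algebra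
  show "d0*d1*b0 = d0*d1*e0*e1 + v*w" using C0 L0 S5 by algebra
qed

lemma core2:
  fixes f g v w d0 d1 d2 e0 e1 e2 a0 b0 a1 b1 a2 b2 :: "'a::field"
  assumes nz: "d0 \<noteq> 0" "d1 \<noteq> 0" "d2 \<noteq> 0"
    and L1: "f + d0 + d1 = b0 - a0^2" and L0: "g + d0*e0 + d1*e1 = a0*b0"
    and C3: "-d1*(a0+a1) = d1*e1" and C2: "d1*(b0+b1+a0*a1) = d1^2 + d1*f"
    and C1: "-d1*(a0*b1+a1*b0) = 2*d1^2*e1 + d1*(e1*f+g) + v"
    and C0: "d1*(b0*b1) = d1^2*e1^2+d1*e1*g - v*w"
    and L1': "f + d1 + d2 = b1 - a1^2" and L0': "g + d1*e1 + d2*e2 = a1*b1"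
    and C3': "-d2*(a1+a2) = d2*e2" and C2': "d2*(b1+b2+a1*a2) = d2^2 + d2*f"
    and C1': "-d2*(a1*b2+a2*b1) = 2*d2^2*e2 + d2*(e2*f+g) + v"
    and C0': "d2*(b1*b2) = d2^2*e2^2+d2*e2*g - v*w"
  shows "v*(w+e1) = -(d0*d1*d2)"
    "(w+e0)*(w+e1)^2*(w+e2) = d1*(w+e1)^2 + (w+e1)*(g+w*f+w^3)"
proof -
  note A = core1[OF nz(1,2) L1 L0 C3 C2 C1 C0]
  note B = core1[OF nz(2,3) L1' L0' C3' C2' C1' C0']
  have Fa: "d0*d1*d2*(e0+e1+e2) = v*(d0+d2)" using A(1,3) B(3) by algebra
  have "d1*(d0*d1*d2*(e1*e2+e1*e0+e1^2) + d0*v*w - d2*e1*v + d0^2*d1*d2) = 0"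
    using A(2,3) B(4) by algebra
  then have Fb: "d0*d1*d2*(e1*e2+e1*e0+e1^2) + d0*v*w - d2*e1*v + d0^2*d1*d2 = 0" using nz by simp
  have "d0*(v*(w+e1) + d0*d1*d2) = 0" using Fa Fb by algebra
  then show "v*(w+e1) = -(d0*d1*d2)" using nz by algebra
  have "d0*d1*((w^2 - a0*w + b0) - (w+e0)*(w+e1)) = 0" using A(3,4) by algebra
  then have Q0: "w^2 - a0*w + b0 = (w+e0)*(w+e1)" using nz by simp
  have "d1*d2*((w^2 - a1*w + b1) - (w+e1)*(w+e2)) = 0" using B(3,4) by algebra
  then have Q1: "w^2 - a1*w + b1 = (w+e1)*(w+e2)" using nz by simp
  have "d1*((w^2 - a0*w + b0)*(w^2 - a1*w + b1) - (d1*(w+e1)^2 + (w+e1)*(w^3+f*w+g))) = 0"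
    using C3 C2 C1 C0 by algebra
  then have "(w^2 - a0*w + b0)*(w^2 - a1*w + b1) = d1*(w+e1)^2 + (w+e1)*(w^3+f*w+g)" using nz by simp
  then show "(w+e0)*(w+e1)^2*(w+e2) = d1*(w+e1)^2 + (w+e1)*(g+w*f+w^3)"
    unfolding Q0 Q1 by algebra
qed

lemma Lpoly:
  fixes g f d0 d1 e0 e1 a0 b0 :: "'a::field"
  assumes "[:g,f,0,1:] + smult d0 [:e0,1:] + smult d1 [:e1,1:] = [:a0,1:] * [:b0,-a0,1:]"
  shows "f + d0 + d1 = b0 - a0^2 \<and> g + d0*e0 + d1*e1 = a0*b0"
  using assms by (simp add: algebra_simps power2_eq_square)

lemma Cpoly:
  fixes g f d1 e1 a0 b0 a1 b1 U v w :: "'a::field"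
  assumes h: "smult (- U) ([:b0,-a0,1:] * [:b1,-a1,1:]) = smult (d1^2) ([:e1,1:]^2) + smult d1 [:e1,1:] * [:g,f,0,1:] - smult (- v) [:- w, 1:]"
  shows "-U = d1 \<and> -d1*(a0+a1) = d1*e1 \<and> d1*(b0+b1+a0*a1) = d1^2 + d1*f
   \<and> -d1*(a0*b1+a1*b0) = 2*d1^2*e1 + d1*(e1*f+g) + v \<and> d1*(b0*b1) = d1^2*e1^2+d1*e1*g - v*w"
proof -
  have c4: "-U = d1" using arg_cong[OF h, of "\<lambda>p. coeff p 4"] by (simp add: numeral_eq_Suc power2_eq_square)
  have c3: "U*(a0+a1) = d1*e1" using arg_cong[OF h, of "\<lambda>p. coeff p 3"] by (simp add: numeral_eq_Suc power2_eq_square algebra_simps)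
  have c2: "-U*(b0+b1+a0*a1) = d1^2 + d1*f" using arg_cong[OF h, of "\<lambda>p. coeff p 2"] by (simp add: numeral_eq_Suc power2_eq_square algebra_simps)
  have c1: "U*(a0*b1+a1*b0) = 2*d1^2*e1 + d1*(e1*f+g) + v" using arg_cong[OF h, of "\<lambda>p. coeff p 1"] by (simp add: numeral_eq_Suc power2_eq_square algebra_simps)
  have c0: "-U*(b0*b1) = d1^2*e1^2+d1*e1*g - v*w" using arg_cong[OF h, of "\<lambda>p. coeff p 0"] by (simp add: numeral_eq_Suc power2_eq_square algebra_simps)
  have "-d1*(a0+a1) = d1*e1" using c3 by (simp add: c4[symmetric] algebra_simps)
  moreover have "d1*(b0+b1+a0*a1) = d1^2 + d1*f" using c2 by (simp add: c4[symmetric] algebra_simps)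
  moreover have "-d1*(a0*b1+a1*b0) = 2*d1^2*e1 + d1*(e1*f+g) + v" using c1 by (simp add: c4[symmetric] algebra_simps)
  moreover have "d1*(b0*b1) = d1^2*e1^2+d1*e1*g - v*w" using c0 by (simp add: c4[symmetric] algebra_simps)
  ultimately show ?thesis using c4 by blast
qed

lemma cf_scalars:
  fixes f g v w :: "'a::field" and u vs ws d e :: "int \<Rightarrow> 'a"
  assumes "cf_line f g v w u vs ws d e h"
  shows "f + d h + d (h+1) = ws h - (vs h)^2 \<and> g + d h*e h + d (h+1)*e (h+1) = vs h*ws h"
    "-(u h * u (h+1)) = d (h+1) \<and> -d (h+1)*(vs h+vs (h+1)) = d (h+1)*e (h+1)
     \<and> d (h+1)*(ws h+ws (h+1)+vs h*vs (h+1)) = d (h+1)^2 + d (h+1)*f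
     \<and> -d (h+1)*(vs h*ws (h+1)+vs (h+1)*ws h) = 2*d (h+1)^2*e (h+1) + d (h+1)*(e (h+1)*f+g) + v
     \<and> d (h+1)*(ws h*ws (h+1)) = d (h+1)^2*e (h+1)^2+d (h+1)*e (h+1)*g - v*w"
proof -
  have 1: "[:g,f,0,1:] + smult (d h) [:e h,1:] + smult (d (h+1)) [:e (h+1),1:] = [:vs h,1:] * [:ws h,-vs h,1:]"
   and 2: "smult (- (u h * u (h+1))) ([:ws h,-vs h,1:] * [:ws (h+1),-vs (h+1),1:]) = smult (d (h+1)^2) ([:e (h+1),1:]^2) + smult (d (h+1)) [:e (h+1),1:] * [:g,f,0,1:] - smult (- v) [:- w, 1:]"
    using assms unfolding cf_line_def cubicA_def quadp_def linR_def by auto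
  show "f + d h + d (h+1) = ws h - (vs h)^2 \<and> g + d h*e h + d (h+1)*e (h+1) = vs h*ws h"
    by (rule Lpoly[OF 1])
  show "-(u h * u (h+1)) = d (h+1) \<and> -d (h+1)*(vs h+vs (h+1)) = d (h+1)*e (h+1)
     \<and> d (h+1)*(ws h+ws (h+1)+vs h*vs (h+1)) = d (h+1)^2 + d (h+1)*f
     \<and> -d (h+1)*(vs h*ws (h+1)+vs (h+1)*ws h) = 2*d (h+1)^2*e (h+1) + d (h+1)*(e (h+1)*f+g) + v
     \<and> d (h+1)*(ws h*ws (h+1)) = d (h+1)^2*e (h+1)^2+d (h+1)*e (h+1)*g - v*w"
    by (rule Cpoly[OF 2])
qed

lemma per_index:
  fixes f g v w :: "'a::field" and u vs ws d e :: "int \<Rightarrow> 'a"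
  assumes u_nz: "\<And>h. u h \<noteq> 0"
    and cf: "\<And>h. cf_line f g v w u vs ws d e h"
  shows "v*(w+e (j+1)) = -(d j*d (j+1)*d (j+2))"
    "(w+e j)*(w+e (j+1))^2*(w+e (j+2)) = d (j+1)*(w+e (j+1))^2 + (w+e (j+1))*(g+w*f+w^3)"
proof -
  have dnz: "d k \<noteq> 0" for k
  proof -
    have "-(u (k-1) * u (k-1+1)) = d (k-1+1)" using cf_scalars(2)[OF cf[of "k-1"]] by blast
    then show ?thesis using u_nz[of "k-1"] u_nz[of k] by auto
  qed
  note X = cf_scalars[OF cf[of j]]
  note Y = cf_scalars[OF cf[of "j+1"]]
  have e: "j+1+1 = j+2" by simp
  note Y' = Y[unfolded e]
  note R = core2[OF dnz[of j] dnz[of "j+1"] dnz[of "j+2"],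
     OF X(1)[THEN conjunct1] X(1)[THEN conjunct2] X(2)[THEN conjunct2, THEN conjunct1]
     X(2)[THEN conjunct2, THEN conjunct2, THEN conjunct1]
     X(2)[THEN conjunct2, THEN conjunct2, THEN conjunct2, THEN conjunct1]
     X(2)[THEN conjunct2, THEN conjunct2, THEN conjunct2, THEN conjunct2]
     Y'(1)[THEN conjunct1] Y'(1)[THEN conjunct2] Y'(2)[THEN conjunct2, THEN conjunct1]
     Y'(2)[THEN conjunct2, THEN conjunct2, THEN conjunct1]
     Y'(2)[THEN conjunct2, THEN conjunct2, THEN conjunct2, THEN conjunct1]
     Y'(2)[THEN conjunct2, THEN conjunct2, THEN conjunct2, THEN conjunct2]]
  show "v*(w+e (j+1)) = -(d j*d (j+1)*d (j+2))" by (rule R(1))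
  show "(w+e j)*(w+e (j+1))^2*(w+e (j+2)) = d (j+1)*(w+e (j+1))^2 + (w+e (j+1))*(g+w*f+w^3)" by (rule R(2))
qed

theorem mainTheorem1:
  fixes f g v w :: "'a::field"
    and u vs ws d e T :: "int \<Rightarrow> 'a"
  assumes char2: "(2::'a) \<noteq> 0" and char3: "(3::'a) \<noteq> 0"
    and u_nz: "\<And>h. u h \<noteq> 0"
    and cf: "\<And>h. cf_line f g v w u vs ws d e h"
    and T_nz: "\<And>h. T h \<noteq> 0"
    and T_rec: "\<And>h. T (h - 1) * T (h + 1) = d h * (T h)^2"
  shows "\<forall>h. T (h - 3) * T (h + 3)
           = v^2 * T (h - 2) * T (h + 2) - v^3 * (g + w * f + w^3) * (T h)^2"
proof
  fix h :: int
  have dnz: "d k \<noteq> 0" for k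
  proof -
    have "-(u (k-1) * u (k-1+1)) = d (k-1+1)" using cf_scalars(2)[OF cf[of "k-1"]] by blast
    then show ?thesis using u_nz[of "k-1"] u_nz[of k] by auto
  qed
  define K where "K = g + w * f + w^3"
  have P1: "v*(w+e (h-1)) = -(d (h-2)*d (h-1)*d h)"
    using per_index(1)[OF u_nz cf, of "h-2"] by simp
  have P2: "v*(w+e h) = -(d (h-1)*d h*d (h+1))"
  proof -
    have i: "h-1+1 = h" "h-1+2 = h+1" by simp_all
    show ?thesis using per_index(1)[OF u_nz cf, of "h-1"] unfolding i .
  qed
  have P3: "v*(w+e (h+1)) = -(d h*d (h+1)*d (h+2))"
    using per_index(1)[OF u_nz cf, of "h"] by simp
  have KR: "(w+e (h-1))*(w+e h)^2*(w+e (h+1)) = d h*(w+e h)^2 + (w+e h)*K"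
  proof -
    have i: "h-1+1 = h" "h-1+2 = h+1" by simp_all
    show ?thesis using per_index(2)[OF u_nz cf, of "h-1"] unfolding i K_def .
  qed
  have vt: "v*(w+e h) \<noteq> 0" using P2 dnz by simp
  have "(v*(w+e h))*(d (h-2)*d (h-1)^2*d h^3*d (h+1)^2*d (h+2) - (v^2*d (h-1)*d h^2*d (h+1) - v^3*K)) = 0"
    using P1 P2 P3 KR by algebra
  then have DD: "d (h-2)*d (h-1)^2*d h^3*d (h+1)^2*d (h+2) = v^2*d (h-1)*d h^2*d (h+1) - v^3*K"
    using vt by simp
  have R0: "T (h-1) * T (h+1) = d h * (T h)^2" by (rule T_rec)
  have Rm1: "T (h-2) * T h = d (h-1) * (T (h-1))^2" using T_rec[of "h-1"] by simp
  have Rp1: "T h * T (h+2) = d (h+1) * (T (h+1))^2" proof -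
    have i: "h+1-1 = h" "h+1+1 = h+2" by simp_all
    show ?thesis using T_rec[of "h+1"] unfolding i .
  qed
  have Rm2: "T (h-3) * T (h-1) = d (h-2) * (T (h-2))^2" proof -
    have i: "h-2-1 = h-3" "h-2+1 = h-1" by simp_all
    show ?thesis using T_rec[of "h-2"] unfolding i .
  qed
  have Rp2: "T (h+1) * T (h+3) = d (h+2) * (T (h+2))^2" proof -
    have i: "h+2-1 = h+1" "h+2+1 = h+3" by simp_all
    show ?thesis using T_rec[of "h+2"] unfolding i .
  qed
  have "(T h)^2 * (T (h-2) * T (h+2) - d (h-1)*d h^2*d (h+1)*(T h)^2) = 0"
    using R0 Rm1 Rp1 by algebra
  then have T2: "T (h-2) * T (h+2) = d (h-1)*d h^2*d (h+1)*(T h)^2" using T_nz[of h] by simp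
  have "(d h * (T h)^2) * (T (h-3) * T (h+3) - d (h-2)*d (h-1)^2*d h^3*d (h+1)^2*d (h+2)*(T h)^2) = 0"
    using R0 Rm2 Rp2 T2 by algebra
  then have T3: "T (h-3) * T (h+3) = d (h-2)*d (h-1)^2*d h^3*d (h+1)^2*d (h+2)*(T h)^2"
    using T_nz[of h] dnz[of h] by simp
  show "T (h - 3) * T (h + 3)
           = v^2 * T (h - 2) * T (h + 2) - v^3 * (g + w * f + w^3) * (T h)^2"
    using T3 T2 DD K_def by algebra
qed

end
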